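(* Let $d \geq 3$ and $n \geq 2$ be primes with $\gcd(d,n) = 1$. Let $u \in S_{d,n}$ and let $[a_1,\dots,a_r]$ be a partition of $u$. Then there is some $i \in \{1,\dots,r\}$ with $\gcd(a_i, nd) = 1$.
   Context: Let $n^\ast \in \{1,\dots,d-1\}$ be the unique integer with $n^\ast \equiv -n \pmod d$, and $S_{d,n} = \{ n^\ast + jd : j \in \mathbb{Z}_{\geq 0},\ n^\ast + jd < n(d-1)\}$. A partition of a positive integer $u$ is a non-empty multiset $[a_1,\dots,a_r]$ of positive integers with $\sum a_i = u$. *)

theory Defs
  imports Main "HOL-Library.Multiset" "HOL-Computational_Algebra.Primes"
begin

(* n^* : the unique integer in {1..d-1} with n^* = -n (mod d). For gcd(d,n)=1 and d>=2
   this is d - (n mod d). *)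
definition nstar :: "nat \<Rightarrow> nat \<Rightarrow> nat" where
  "nstar d n = (THE m. m \<in> {1..d-1} \<and> int m mod int d = (- int n) mod int d)"

definition S_set :: "nat \<Rightarrow> nat \<Rightarrow> nat set" where
  "S_set d n = {nstar d n + j * d | j. nstar d n + j * d < n * (d - 1)}"

definition is_partition :: "nat multiset \<Rightarrow> nat \<Rightarrow> bool" where
  "is_partition A u \<longleftrightarrow> A \<noteq> {#} \<and> (\<forall>a\<in>#A. a > 0) \<and> sum_mset A = u"

end

theory Submission
  imports Defs
begin

lemma nstar_prop:
  assumes "d \<ge> 2" and "\<not> d dvd n"
  shows "int (nstar d n) mod int d = (- int n) mod int d"
proof -
  let ?P = "\<lambda>m. m \<in> {1..d-1} \<and> int m mod int d = (- int n) mod int d"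
  define m0 where "m0 = d - n mod d"
  have nm: "n mod d > 0" "n mod d < d" using assms by (auto simp: mod_greater_zero_iff_not_dvd)
  have "?P m0"
  proof
    show "m0 \<in> {1..d-1}" using nm unfolding m0_def by auto
    have "int m0 = int d - int (n mod d)" using nm unfolding m0_def by auto
    also have "int (n mod d) = int n mod int d" by (simp add: zmod_int)
    finally have "int m0 = int d - int n mod int d" .
    then show "int m0 mod int d = (- int n) mod int d"
      by (metis add.commute diff_add_cancel mod_add_self2 mod_diff_right_eq diff_0 mod_0 diff_minus_eq_add minus_diff_eq)
  qed
  moreover have "\<And>m. ?P m \<Longrightarrow> m = m0"
  proof -
    fix m assume h: "?P m"
    have a: "int m mod int d = int m" using h assms by auto
    have b: "int m0 mod int d = int m0" using \<open>?P m0\<close> assms by auto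
    show "m = m0" using a b h \<open>?P m0\<close> by simp
  qed
  ultimately have "?P (nstar d n)" unfolding nstar_def by (rule theI)
  then show ?thesis by blast
qed

lemma dvd_sum_mset_all: "(\<forall>a\<in>#M. (c::nat) dvd a) \<Longrightarrow> c dvd sum_mset M"
  by (induction M) auto

theorem lemma3p9:
  fixes d n u :: nat and A :: "nat multiset"
  assumes "prime d" and "d \<ge> 3" and "prime n" and "n \<ge> 2" and "coprime d n"
    and "u \<in> S_set d n"
    and "is_partition A u"
  shows "\<exists>a\<in>#A. coprime a (n * d)"
proof (rule ccontr)
  assume H: "\<not> (\<exists>a\<in>#A. coprime a (n * d))"
  have nd: "\<not> d dvd n"
    using assms(1,3,5) by (metis coprime_common_divisor dvd_refl not_prime_unit)
  obtain j where u: "u = nstar d n + j * d" "u < n * (d - 1)"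
    using assms(6) unfolding S_set_def by auto
  have umod: "int u mod int d = (- int n) mod int d"
  proof -
    have "int u mod int d = int (nstar d n) mod int d"
      using u(1) by (simp add: mod_add_right_eq [symmetric])
    then show ?thesis using nstar_prop[of d n] assms(2) nd by simp
  qed
  have each: "\<forall>a\<in>#A. n dvd a \<or> d dvd a"
  proof
    fix a assume "a \<in># A"
    with H have "\<not> coprime a (n * d)" by blast
    then have "\<not> coprime a n \<or> \<not> coprime a d" by auto
    then show "n dvd a \<or> d dvd a"
      using assms(1,3) by (metis coprime_commute prime_imp_coprime)
  qed
  define A1 where "A1 = filter_mset (\<lambda>a. n dvd a) A"
  define A2 where "A2 = filter_mset (\<lambda>a. \<not> n dvd a) A"
  have "A = A1 + A2" unfolding A1_def A2_def by simp
  then have us: "u = sum_mset A1 + sum_mset A2" using assms(7) unfolding is_partition_def by (metis sum_mset.union)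
  have "n dvd sum_mset A1" by (rule dvd_sum_mset_all) (auto simp: A1_def)
  then obtain k where k: "sum_mset A1 = n * k" by blast
  have "d dvd sum_mset A2" by (rule dvd_sum_mset_all) (use each in \<open>auto simp: A2_def\<close>)
  then obtain m where m: "sum_mset A2 = d * m" by blast
  have "int u = int n * int k + int d * int m" using us k m by simp
  then have "(int n * int k + int d * int m) mod int d = (- int n) mod int d" using umod by simp
  then have "(int n * int k) mod int d = (- int n) mod int d" by simp
  then have "int d dvd int n * int k - (- int n)" by (simp add: mod_eq_dvd_iff)
  then have "int d dvd int n * (int k + 1)" by (simp add: algebra_simps)
  then have "d dvd n * (k + 1)" by (metis of_nat_1 of_nat_add of_nat_dvd_iff of_nat_mult)
  then have "d dvd k + 1" using assms(1) nd prime_dvd_mult_iff by blast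
  then have "d \<le> k + 1" by (simp add: dvd_imp_le)
  then have "n * (d - 1) \<le> n * k" by (intro mult_le_mono2) linarith
  then show False using u(2) us k by linarith
qed

end
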